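(* Let $\mathcal{H}$ be a complex Hilbert space and let $A,B,X\in\mathcal{B}(\mathcal{H})$ be such that the operators $A$, $X$, $X^{*}$, $B$ pairwise commute, $A$ is positive and invertible, and the operator matrix $$M=\begin{pmatrix} A & X\\ X^{*} & B\end{pmatrix}\in\mathcal{B}(\mathcal{H}\oplus\mathcal{H})$$ is positive. Put $\operatorname{tr}M:=A+B$, $\det M:=AB-X^{*}X$ and $Q:=(\det M)^{1/2}$. Then $\operatorname{tr}M+2Q$ is positive and invertible, and $$\sqrt{M}=\begin{pmatrix} (\operatorname{tr}M+2Q)^{-1/2} & 0\\ 0 & (\operatorname{tr}M+2Q)^{-1/2}\end{pmatrix}\begin{pmatrix} A+Q & X\\ X^{*} & B+Q\end{pmatrix}.$$
   Context: $\sqrt{M}$ denotes the unique positive square root of the positive operator $M$. Under the hypotheses, $\det M$ is a positive operator lying in the abelian unital $C^*$-algebra generated by $A,X,B$, so $Q$ is its positive square root. *)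

theory Defs
  imports "HOL-Analysis.Analysis"
begin

class complex_hilbert = real_normed_vector + complete_space +
  fixes scaleC :: "complex \<Rightarrow> 'a \<Rightarrow> 'a"
    and cinner :: "'a \<Rightarrow> 'a \<Rightarrow> complex"
  assumes scaleC_add_right: "scaleC c (x + y) = scaleC c x + scaleC c y"
    and scaleC_add_left: "scaleC (c + d) x = scaleC c x + scaleC d x"
    and scaleC_scaleC: "scaleC c (scaleC d x) = scaleC (c * d) x"
    and scaleC_one: "scaleC 1 x = x"
    and scaleR_scaleC: "scaleR r x = scaleC (complex_of_real r) x"
    and cinner_commute: "cinner x y = cnj (cinner y x)"
    and cinner_add_left: "cinner (x + y) z = cinner x z + cinner y z"
    and cinner_scaleC_left: "cinner (scaleC c x) y = cnj c * cinner x y"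
    and cinner_self_nonneg: "0 \<le> Re (cinner x x)"
    and cinner_self_eq_zero: "cinner x x = 0 \<longleftrightarrow> x = 0"
    and norm_eq_sqrt_cinner: "norm x = sqrt (Re (cinner x x))"

text \<open>The direct sum H \<oplus> H, realised as the product type.\<close>

instantiation prod :: (complex_hilbert, complex_hilbert) complex_hilbert
begin

definition scaleC_prod_def: "scaleC c p = (scaleC c (fst p), scaleC c (snd p))"
definition cinner_prod_def: "cinner p q = cinner (fst p) (fst q) + cinner (snd p) (snd q)"

instance
proof
  fix c d :: complex and x y z :: "'a \<times> 'b" and r :: real
  show "scaleC c (x + y) = scaleC c x + scaleC c y"
    by (simp add: scaleC_prod_def scaleC_add_right)
  show "scaleC (c + d) x = scaleC c x + scaleC d x"
    by (simp add: scaleC_prod_def scaleC_add_left)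
  show "scaleC c (scaleC d x) = scaleC (c * d) x"
    by (simp add: scaleC_prod_def scaleC_scaleC)
  show "scaleC 1 x = x"
    by (simp add: scaleC_prod_def scaleC_one)
  show "scaleR r x = scaleC (complex_of_real r) x"
    by (simp add: scaleC_prod_def scaleR_scaleC scaleR_prod_def)
  show "cinner x y = cnj (cinner y x)"
    by (simp add: cinner_prod_def cinner_commute[of "fst x"] cinner_commute[of "snd x"])
  show "cinner (x + y) z = cinner x z + cinner y z"
    by (simp add: cinner_prod_def cinner_add_left)
  show "cinner (scaleC c x) y = cnj c * cinner x y"
    by (simp add: cinner_prod_def scaleC_prod_def cinner_scaleC_left distrib_left)
  show "0 \<le> Re (cinner x x)"
    by (simp add: cinner_prod_def add_nonneg_nonneg cinner_self_nonneg)
  have n1: "Re (cinner u u) = (norm u)\<^sup>2" for u :: 'a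
    using cinner_self_nonneg[of u] by (simp add: norm_eq_sqrt_cinner)
  have n2: "Re (cinner u u) = (norm u)\<^sup>2" for u :: 'b
    using cinner_self_nonneg[of u] by (simp add: norm_eq_sqrt_cinner)
  show "norm x = sqrt (Re (cinner x x))"
    by (simp add: cinner_prod_def norm_prod_def n1 n2)
  show "cinner x x = 0 \<longleftrightarrow> x = 0"
  proof
    assume h: "cinner x x = 0"
    then have "Re (cinner x x) = 0" by simp
    then have "(norm (fst x))\<^sup>2 + (norm (snd x))\<^sup>2 = 0"
      by (simp add: cinner_prod_def n1 n2)
    then have "fst x = 0" "snd x = 0"
      by (simp_all add: add_nonneg_eq_0_iff)
    then show "x = 0" by (simp add: prod_eq_iff)
  next
    assume "x = 0"
    then show "cinner x x = 0"
      using cinner_self_eq_zero[of "0::'a"] cinner_self_eq_zero[of "0::'b"]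
      by (simp add: cinner_prod_def)
  qed
qed

end

definition bounded_op :: "('a::complex_hilbert \<Rightarrow> 'b::complex_hilbert) \<Rightarrow> bool" where
  "bounded_op T \<longleftrightarrow> bounded_linear T \<and> (\<forall>c x. T (scaleC c x) = scaleC c (T x))"

definition adj :: "('a::complex_hilbert \<Rightarrow> 'b::complex_hilbert) \<Rightarrow> ('b \<Rightarrow> 'a)" where
  "adj T = (THE S. \<forall>x y. cinner (T x) y = cinner x (S y))"

definition positive_op :: "('a::complex_hilbert \<Rightarrow> 'a) \<Rightarrow> bool" where
  "positive_op T \<longleftrightarrow> bounded_op T \<and>
     (\<forall>x. Im (cinner x (T x)) = 0 \<and> 0 \<le> Re (cinner x (T x)))"

definition invertible_op :: "('a::complex_hilbert \<Rightarrow> 'a) \<Rightarrow> bool" where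
  "invertible_op T \<longleftrightarrow> bounded_op T \<and>
     (\<exists>S. bounded_op S \<and> S \<circ> T = id \<and> T \<circ> S = id)"

definition op_inv :: "('a::complex_hilbert \<Rightarrow> 'a) \<Rightarrow> ('a \<Rightarrow> 'a)" where
  "op_inv T = (THE S. S \<circ> T = id \<and> T \<circ> S = id)"

definition op_sqrt :: "('a::complex_hilbert \<Rightarrow> 'a) \<Rightarrow> ('a \<Rightarrow> 'a)" where
  "op_sqrt T = (THE S. positive_op S \<and> S \<circ> S = T)"

definition op_matrix :: "('a::complex_hilbert \<Rightarrow> 'a) \<Rightarrow> ('a \<Rightarrow> 'a) \<Rightarrow> ('a \<Rightarrow> 'a) \<Rightarrow> ('a \<Rightarrow> 'a)
    \<Rightarrow> ('a \<times> 'a \<Rightarrow> 'a \<times> 'a)" where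
  "op_matrix P Q R S = (\<lambda>(x, y). (P x + Q y, R x + S y))"

end

theory Submission
  imports Defs
begin

lemma scaleC_zero_right[simp]: "scaleC c (0::'a::complex_hilbert) = 0"
  using scaleC_add_right[of c "0::'a" 0] by simp

lemma scaleC_zero_left[simp]: "scaleC 0 (x::'a::complex_hilbert) = 0"
  using scaleC_add_left[of 0 0 x] by simp

lemma scaleC_real: "scaleC (complex_of_real r) (x::'a::complex_hilbert) = r *\<^sub>R x"
  by (simp add: scaleR_scaleC)

lemma scaleC_minus_right: "scaleC c (- (x::'a::complex_hilbert)) = - scaleC c x"
  using scaleC_add_right[of c x "-x"] by (simp add: eq_neg_iff_add_eq_0 add.commute)

lemma scaleC_diff_right: "scaleC c ((x::'a::complex_hilbert) - y) = scaleC c x - scaleC c y"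
  using scaleC_add_right[of c x "-y"] scaleC_minus_right[of c y] by simp

lemma cinner_add_right: "cinner (x::'a::complex_hilbert) (y + z) = cinner x y + cinner x z"
  by (metis cinner_add_left cinner_commute complex_cnj_add)

lemma cinner_scaleC_right: "cinner (x::'a::complex_hilbert) (scaleC c y) = c * cinner x y"
  by (metis cinner_commute cinner_scaleC_left complex_cnj_cnj complex_cnj_mult)

lemma cinner_zero_left[simp]: "cinner 0 (x::'a::complex_hilbert) = 0"
  using cinner_add_left[of 0 0 x] by simp

lemma cinner_zero_right[simp]: "cinner (x::'a::complex_hilbert) 0 = 0"
  using cinner_add_right[of x 0 0] by simp

lemma cinner_minus_left: "cinner (- x) (y::'a::complex_hilbert) = - cinner x y"
  using cinner_add_left[of x "-x" y] by (simp add: eq_neg_iff_add_eq_0 add.commute)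

lemma cinner_minus_right: "cinner x (- y::'a::complex_hilbert) = - cinner x y"
  using cinner_add_right[of x y "-y"] by (simp add: eq_neg_iff_add_eq_0 add.commute)

lemma cinner_diff_left: "cinner (x - y) (z::'a::complex_hilbert) = cinner x z - cinner y z"
  using cinner_add_left[of x "-y" z] cinner_minus_left[of y z] by simp

lemma cinner_diff_right: "cinner x (y - z::'a::complex_hilbert) = cinner x y - cinner x z"
  using cinner_add_right[of x y "-z"] cinner_minus_right[of x z] by simp

lemma cinner_scaleR_left: "cinner (r *\<^sub>R x) (y::'a::complex_hilbert) = complex_of_real r * cinner x y"
  by (simp add: scaleR_scaleC cinner_scaleC_left)

lemma cinner_scaleR_right: "cinner x (r *\<^sub>R y::'a::complex_hilbert) = complex_of_real r * cinner x y"
  by (simp add: scaleR_scaleC cinner_scaleC_right)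

lemmas cinner_simps = cinner_add_left cinner_add_right cinner_diff_left cinner_diff_right
  cinner_minus_left cinner_minus_right cinner_scaleR_left cinner_scaleR_right
  cinner_scaleC_left cinner_scaleC_right

lemma cinner_self_real: "cinner x (x::'a::complex_hilbert) = complex_of_real ((norm x)\<^sup>2)"
proof -
  have "Im (cinner x x) = Im (cnj (cinner x x))" using cinner_commute[of x x] by metis
  then have "Im (cinner x x) = 0" by simp
  moreover have "Re (cinner x x) = (norm x)\<^sup>2"
    using cinner_self_nonneg[of x] by (simp add: norm_eq_sqrt_cinner)
  ultimately show ?thesis by (simp add: complex_eq_iff)
qed

lemma Re_cinner_self: "Re (cinner x (x::'a::complex_hilbert)) = (norm x)\<^sup>2"
  by (simp add: cinner_self_real)

lemma bop_lin: "bounded_op T \<Longrightarrow> bounded_linear T"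
  by (simp add: bounded_op_def)
lemma bop_add: "bounded_op T \<Longrightarrow> T (x + y) = T x + T y"
  by (simp add: bounded_op_def linear_simps)
lemma bop_diff: "bounded_op T \<Longrightarrow> T (x - y) = T x - T y"
  by (simp add: bounded_op_def linear_simps)
lemma bop_minus: "bounded_op T \<Longrightarrow> T (- x) = - T x"
  by (simp add: bounded_op_def linear_simps)
lemma bop_zero: "bounded_op T \<Longrightarrow> T 0 = 0"
  by (simp add: bounded_op_def linear_simps)
lemma bop_scaleR: "bounded_op T \<Longrightarrow> T (r *\<^sub>R x) = r *\<^sub>R T x"
  by (simp add: bounded_op_def linear_simps)
lemma bop_scaleC: "bounded_op T \<Longrightarrow> T (scaleC c x) = scaleC c (T x)"
  by (simp add: bounded_op_def)

lemma pos_bop: "positive_op T \<Longrightarrow> bounded_op T"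
  by (simp add: positive_op_def)

lemma pos_Im: "positive_op T \<Longrightarrow> Im (cinner x (T x)) = 0"
  by (simp add: positive_op_def)
lemma pos_Re: "positive_op T \<Longrightarrow> 0 \<le> Re (cinner x (T x))"
  by (simp add: positive_op_def)

lemma pos_hermitian:
  assumes P: "positive_op T"
  shows "cinner x (T y) = cinner (T x) y"
proof -
  have b: "bounded_op T" using P by (simp add: positive_op_def)
  define p where "p = cinner x (T y)"
  define q where "q = cinner y (T x)"
  have "Im (cinner (x + y) (T (x + y))) = 0" using pos_Im[OF P] .
  then have "Im (cinner x (T x) + p + q + cinner y (T y)) = 0"
    by (simp add: bop_add[OF b] cinner_simps p_def q_def algebra_simps)
  then have 1: "Im p + Im q = 0" using pos_Im[OF P, of x] pos_Im[OF P, of y] by simp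
  have "Im (cinner (x + scaleC \<i> y) (T (x + scaleC \<i> y))) = 0" using pos_Im[OF P] .
  then have "Im (cinner x (T x) + \<i> * p - \<i> * q + cinner y (T y)) = 0"
    by (simp add: bop_add[OF b] bop_scaleC[OF b] cinner_simps p_def q_def algebra_simps)
  then have 2: "Re p - Re q = 0" using pos_Im[OF P, of x] pos_Im[OF P, of y] by simp
  have "cinner (T x) y = cnj q" using cinner_commute q_def by metis
  moreover have "p = cnj q" using 1 2 by (simp add: complex_eq_iff)
  ultimately show ?thesis using p_def by simp
qed

lemma pos_CS:
  assumes P: "positive_op T"
  shows "(cmod (cinner x (T y)))\<^sup>2 \<le> Re (cinner x (T x)) * Re (cinner y (T y))"
proof -
  have b: "bounded_op T" using P by (simp add: positive_op_def)
  define bb where "bb = cinner x (T y)"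
  define a where "a = Re (cinner x (T x))"
  define c where "c = Re (cinner y (T y))"
  have a0: "0 \<le> a" "0 \<le> c" using pos_Re[OF P] a_def c_def by auto
  have ya: "cinner y (T x) = cnj bb"
    using pos_hermitian[OF P, of y x] cinner_commute[of "T y" x] bb_def by simp
  have xx: "cinner x (T x) = complex_of_real a" using pos_Im[OF P, of x] a_def
    by (simp add: complex_eq_iff)
  have yy: "cinner y (T y) = complex_of_real c" using pos_Im[OF P, of y] c_def
    by (simp add: complex_eq_iff)
  have bb2: "bb * cnj bb = complex_of_real ((cmod bb)\<^sup>2)"
    by (metis complex_norm_square of_real_power)
  have quad: "0 \<le> a - 2 * t * (cmod bb)\<^sup>2 + t\<^sup>2 * (cmod bb)\<^sup>2 * c" for t :: real
  proof -
    define s where "s = complex_of_real t * cnj bb"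
    have "0 \<le> Re (cinner (x - scaleC s y) (T (x - scaleC s y)))" using pos_Re[OF P] .
    also have "cinner (x - scaleC s y) (T (x - scaleC s y)) =
        cinner x (T x) - s * bb - cnj s * cnj bb + cnj s * s * cinner y (T y)"
      by (simp add: bop_diff[OF b] bop_scaleC[OF b] cinner_simps bb_def ya algebra_simps)
    also have "\<dots> = complex_of_real (a - 2 * t * (cmod bb)\<^sup>2 + t\<^sup>2 * (cmod bb)\<^sup>2 * c)"
    proof -
      have "s * bb = complex_of_real (t * (cmod bb)\<^sup>2)" using bb2 s_def
        by (simp add: algebra_simps)
      moreover have "cnj s * cnj bb = complex_of_real (t * (cmod bb)\<^sup>2)" using bb2 s_def
        by (simp add: algebra_simps)
      moreover have "cnj s * s = complex_of_real (t\<^sup>2 * (cmod bb)\<^sup>2)" using bb2 s_def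
        by (simp add: algebra_simps power2_eq_square)
      ultimately show ?thesis using xx yy by simp
    qed
    finally show ?thesis by simp
  qed
  show ?thesis
  proof (cases "c = 0")
    case True
    show ?thesis
    proof (rule ccontr)
      assume "\<not> ?thesis"
      then have "\<not> (cmod bb)\<^sup>2 \<le> a * c" using a_def c_def bb_def by simp
      then have pos: "0 < (cmod bb)\<^sup>2" using True by simp
      have "0 \<le> a - 2 * ((a + 1) / (2 * (cmod bb)\<^sup>2)) * (cmod bb)\<^sup>2"
        using quad[of "(a + 1) / (2 * (cmod bb)\<^sup>2)"] True by simp
      also have "\<dots> = -1" using pos by (simp add: field_simps)
      finally show False by simp
    qed
  next
    case False
    then have cp: "0 < c" using a0 by simp
    have "0 \<le> a - 2 * (1/c) * (cmod bb)\<^sup>2 + (1/c)\<^sup>2 * (cmod bb)\<^sup>2 * c" using quad .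
    also have "\<dots> = a - (cmod bb)\<^sup>2 / c" using cp by (simp add: field_simps power2_eq_square)
    finally have "(cmod bb)\<^sup>2 / c \<le> a" by simp
    then show ?thesis using cp bb_def a_def c_def by (simp add: field_simps)
  qed
qed

lemma bop_id: "bounded_op (id :: 'a::complex_hilbert \<Rightarrow> 'a)"
  by (simp add: bounded_op_def bounded_linear_ident[unfolded id_def] id_def)

lemma pos_id: "positive_op (id :: 'a::complex_hilbert \<Rightarrow> 'a)"
  by (simp add: positive_op_def bop_id cinner_self_real)

lemma cinner_CS: "cmod (cinner x y) \<le> norm x * norm (y::'a::complex_hilbert)"
proof -
  have "(cmod (cinner x y))\<^sup>2 \<le> (norm x)\<^sup>2 * (norm y)\<^sup>2"
    using pos_CS[OF pos_id, of x y] by (simp add: Re_cinner_self)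
  then show ?thesis
    by (metis norm_ge_zero power2_le_imp_le power_mult_distrib zero_le_mult_iff)
qed

lemma Re_cinner_le: "Re (cinner x y) \<le> norm x * norm (y::'a::complex_hilbert)"
  using cinner_CS[of x y] abs_Re_le_cmod[of "cinner x y"] by linarith

lemma pos_norm_bound:
  assumes P: "positive_op T" and K: "\<And>y. norm (T y) \<le> K * norm y" and K0: "0 \<le> K"
  shows "(norm (T x))\<^sup>2 \<le> K * Re (cinner x (T x))"
proof (cases "norm (T x) = 0")
  case True then show ?thesis using pos_Re[OF P, of x] K0 by simp
next
  case False
  have e: "cmod (cinner (T x) (T x)) = (norm (T x))\<^sup>2"
    unfolding cinner_self_real norm_of_real by simp
  have "((norm (T x))\<^sup>2)\<^sup>2 \<le> Re (cinner (T x) (T (T x))) * Re (cinner x (T x))"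
    using pos_CS[OF P, of "T x" x] unfolding e .
  also have "Re (cinner (T x) (T (T x))) \<le> K * (norm (T x))\<^sup>2"
  proof -
    have "Re (cinner (T x) (T (T x))) \<le> norm (T x) * norm (T (T x))" by (rule Re_cinner_le)
    also have "\<dots> \<le> norm (T x) * (K * norm (T x))" using K by (simp add: mult_left_mono)
    finally show ?thesis by (simp add: power2_eq_square algebra_simps)
  qed
  then have "Re (cinner (T x) (T (T x))) * Re (cinner x (T x)) \<le> K * (norm (T x))\<^sup>2 * Re (cinner x (T x))"
    using pos_Re[OF P, of x] by (simp add: mult_right_mono)
  finally have "(norm (T x))\<^sup>2 * (norm (T x))\<^sup>2 \<le> (norm (T x))\<^sup>2 * (K * Re (cinner x (T x)))"
    by (simp add: power2_eq_square algebra_simps)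
  moreover have "0 < (norm (T x))\<^sup>2" using False by simp
  ultimately show ?thesis by (meson mult_le_cancel_left_pos)
qed

lemma scaleC_scaleR_comm: "scaleC c (r *\<^sub>R (x::'a::complex_hilbert)) = r *\<^sub>R scaleC c x"
  by (simp add: scaleR_scaleC scaleC_scaleC mult.commute)

lemma scaleC_add_right': "scaleC c (x + y) = scaleC c x + scaleC c (y::'a::complex_hilbert)"
  by (rule scaleC_add_right)

lemma bop_comp: "bounded_op S \<Longrightarrow> bounded_op T \<Longrightarrow> bounded_op (\<lambda>x. S (T x))"
  unfolding bounded_op_def
  using bounded_linear_compose[of S T] by (auto simp: o_def)

lemma bop_comp': "bounded_op S \<Longrightarrow> bounded_op T \<Longrightarrow> bounded_op (S \<circ> T)"
  using bop_comp[of S T] by (simp add: o_def)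

lemma bop_add_op: "bounded_op S \<Longrightarrow> bounded_op T \<Longrightarrow> bounded_op (\<lambda>x. S x + T x)"
  unfolding bounded_op_def
  using bounded_linear_add[of S T] by (auto simp: scaleC_add_right)

lemma bop_diff_op: "bounded_op S \<Longrightarrow> bounded_op T \<Longrightarrow> bounded_op (\<lambda>x. S x - T x)"
  unfolding bounded_op_def
  using bounded_linear_sub[of S T] by (auto simp: scaleC_diff_right)

lemma bop_scale_op: "bounded_op S \<Longrightarrow> bounded_op (\<lambda>x. a *\<^sub>R S x)"
  unfolding bounded_op_def
  using bounded_linear_scaleR_right bounded_linear_compose[of "scaleR a" S]
  by (auto simp: scaleC_scaleR_comm)

lemma bop_zero_op: "bounded_op (\<lambda>x. 0 :: 'b::complex_hilbert)"
  unfolding bounded_op_def by (simp add: bounded_linear_zero)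

lemma bop_ident: "bounded_op (\<lambda>x::'a::complex_hilbert. x)"
  using bop_id by (simp add: id_def)

lemma pos_add_op: "positive_op S \<Longrightarrow> positive_op T \<Longrightarrow> positive_op (\<lambda>x. S x + T x)"
  unfolding positive_op_def using bop_add_op[of S T]
  by (auto simp: cinner_add_right)

lemma pos_scale_op: "positive_op S \<Longrightarrow> 0 \<le> a \<Longrightarrow> positive_op (\<lambda>x. a *\<^sub>R S x)"
  unfolding positive_op_def using bop_scale_op[of S a]
  by (auto simp: cinner_scaleR_right)

lemma pos_zero_op: "positive_op (\<lambda>x. 0 :: 'b::complex_hilbert)"
  unfolding positive_op_def by (simp add: bop_zero_op)

lemma bl_cinner: "bounded_linear (\<lambda>y. cinner (x::'a::complex_hilbert) y)"
proof (rule bounded_linear_intro[where K="norm x"])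
  show "cinner x (y + z) = cinner x y + cinner x z" for y z by (rule cinner_add_right)
  show "cinner x (r *\<^sub>R y) = r *\<^sub>R cinner x y" for r y
    by (simp add: cinner_scaleR_right scaleR_conv_of_real)
  show "norm (cinner x y) \<le> norm y * norm x" for y
    using cinner_CS[of x y] by (simp add: mult.commute)
qed

lemma tendsto_cinner_right:
  "(f \<longlongrightarrow> l) F \<Longrightarrow> ((\<lambda>n. cinner (x::'a::complex_hilbert) (f n)) \<longlongrightarrow> cinner x l) F"
  using bounded_linear.tendsto[OF bl_cinner] .

lemma bl_scaleC: "bounded_linear (scaleC c :: 'a::complex_hilbert \<Rightarrow> 'a)"
proof (rule bounded_linear_intro[where K="cmod c"])
  show "scaleC c (y + z) = scaleC c y + scaleC c z" for y z :: 'a by (rule scaleC_add_right)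
  show "scaleC c (r *\<^sub>R y) = r *\<^sub>R scaleC c y" for r and y :: 'a by (rule scaleC_scaleR_comm)
  show "norm (scaleC c y) \<le> norm y * cmod c" for y :: 'a
  proof -
    have "cinner (scaleC c y) (scaleC c y) = (cnj c * c) * cinner y y"
      by (simp add: cinner_scaleC_left cinner_scaleC_right)
    also have "cnj c * c = complex_of_real ((cmod c)\<^sup>2)"
      by (metis complex_norm_square mult.commute of_real_power)
    finally have "cinner (scaleC c y) (scaleC c y) = complex_of_real ((cmod c)\<^sup>2 * (norm y)\<^sup>2)"
      by (simp add: cinner_self_real)
    then have "(norm (scaleC c y))\<^sup>2 = (cmod c)\<^sup>2 * (norm y)\<^sup>2"
      using Re_cinner_self[of "scaleC c y"] by simp
    then have "norm (scaleC c y) = cmod c * norm y"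
      by (metis norm_ge_zero power2_eq_imp_eq power_mult_distrib zero_le_mult_iff)
    then show ?thesis by (simp add: mult.commute)
  qed
qed

inductive_set pcone :: "('a::complex_hilbert \<Rightarrow> 'a) \<Rightarrow> ('a \<Rightarrow> 'a) set" for C where
  pc_pow: "(C ^^ k) \<in> pcone C"
| pc_zero: "(\<lambda>x. 0) \<in> pcone C"
| pc_add: "P \<in> pcone C \<Longrightarrow> Q \<in> pcone C \<Longrightarrow> (\<lambda>x. P x + Q x) \<in> pcone C"
| pc_scale: "P \<in> pcone C \<Longrightarrow> 0 \<le> a \<Longrightarrow> (\<lambda>x. a *\<^sub>R P x) \<in> pcone C"

lemma pow_bop: fixes C :: "'a::complex_hilbert \<Rightarrow> 'a" shows "bounded_op C \<Longrightarrow> bounded_op (C ^^ k)"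
proof (induction k)
  case 0
  show ?case using bop_ident by simp
next
  case (Suc k) then show ?case using bop_comp[of C "C ^^ k"] by simp
qed

lemma pow_herm: fixes C :: "'a::complex_hilbert \<Rightarrow> 'a" shows "positive_op C \<Longrightarrow> cinner x ((C ^^ k) y) = cinner ((C ^^ k) x) y"
proof (induction k arbitrary: x y)
  case 0 then show ?case by simp
next
  case (Suc k)
  have "cinner x ((C ^^ Suc k) y) = cinner x (C ((C ^^ k) y))" by simp
  also have "\<dots> = cinner (C x) ((C ^^ k) y)" using pos_hermitian[OF Suc.prems] by simp
  also have "\<dots> = cinner ((C ^^ k) (C x)) y" using Suc by simp
  also have "\<dots> = cinner ((C ^^ Suc k) x) y" by (simp add: funpow_swap1)
  finally show ?case .
qed

lemma pow_pos: fixes C :: "'a::complex_hilbert \<Rightarrow> 'a" assumes P: "positive_op C" shows "positive_op (C ^^ k)"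
proof -
  have b: "bounded_op (C ^^ k)" using pow_bop pos_bop P by blast
  define j where "j = k div 2"
  have j: "k = j + j \<or> k = Suc (j + j)" unfolding j_def by presburger
  have "Im (cinner x ((C ^^ k) x)) = 0 \<and> 0 \<le> Re (cinner x ((C ^^ k) x))" for x
  proof (cases "k = j + j")
    case True
    have "cinner x ((C ^^ k) x) = cinner x ((C ^^ j) ((C ^^ j) x))"
      using True by (simp add: funpow_add)
    also have "\<dots> = cinner ((C ^^ j) x) ((C ^^ j) x)" using pow_herm[OF P] by simp
    finally show ?thesis by (simp add: cinner_self_real)
  next
    case False
    then have k: "k = Suc (j + j)" using j by simp
    have "(C ^^ k) x = (C ^^ j) (C ((C ^^ j) x))"
      using k by (simp add: funpow_add funpow_swap1)
    then have "cinner x ((C ^^ k) x) = cinner ((C ^^ j) x) (C ((C ^^ j) x))"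
      using pow_herm[OF P] by simp
    then show ?thesis using pos_Im[OF P] pos_Re[OF P] by simp
  qed
  then show ?thesis using b by (simp add: positive_op_def)
qed

lemma pcone_bop: "P \<in> pcone C \<Longrightarrow> bounded_op C \<Longrightarrow> bounded_op P"
  by (induction rule: pcone.induct) (auto intro: pow_bop bop_zero_op bop_add_op bop_scale_op)

lemma pcone_pos: "P \<in> pcone C \<Longrightarrow> positive_op C \<Longrightarrow> positive_op P"
  by (induction rule: pcone.induct) (auto intro: pow_pos pos_zero_op pos_add_op pos_scale_op)

lemma pow_comm: fixes C :: "'a::complex_hilbert \<Rightarrow> 'a" shows "bounded_linear U \<Longrightarrow> (\<And>x. U (C x) = C (U x)) \<Longrightarrow> U ((C ^^ k) x) = (C ^^ k) (U x)"
  by (induction k arbitrary: x) auto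

lemma pcone_comm: "P \<in> pcone C \<Longrightarrow> bounded_linear U \<Longrightarrow> (\<And>x. U (C x) = C (U x))
   \<Longrightarrow> U (P x) = P (U x)"
proof (induction arbitrary: x rule: pcone.induct)
  case (pc_pow k) then show ?case using pow_comm by blast
next
  case pc_zero then show ?case by (simp add: linear_simps)
next
  case (pc_add P Q) then show ?case by (simp add: linear_simps)
next
  case (pc_scale P a) then show ?case by (simp add: linear_simps)
qed

lemma pcone_comp_pow:
  assumes "Q \<in> pcone C" "bounded_op C"
  shows "(\<lambda>x. (C ^^ k) (Q x)) \<in> pcone C"
  using assms
proof (induction rule: pcone.induct)
  case (pc_pow j)
  have "(\<lambda>x. (C ^^ k) ((C ^^ j) x)) = C ^^ (k + j)" by (simp add: funpow_add o_def)
  then show ?case by (simp add: pcone.pc_pow)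
next
  case pc_zero
  have "(\<lambda>x. (C ^^ k) 0) = (\<lambda>x. 0)" using bop_zero[OF pow_bop[OF pc_zero]] by simp
  then show ?case by (metis pcone.pc_zero)
next
  case (pc_add P Q)
  have "(\<lambda>x. (C ^^ k) (P x + Q x)) = (\<lambda>x. (C ^^ k) (P x) + (C ^^ k) (Q x))"
    using bop_add[OF pow_bop[OF pc_add.prems]] by simp
  then show ?case using pcone.pc_add[OF pc_add.IH] pc_add.prems by simp
next
  case (pc_scale P a)
  have "(\<lambda>x. (C ^^ k) (a *\<^sub>R P x)) = (\<lambda>x. a *\<^sub>R (C ^^ k) (P x))"
    using bop_scaleR[OF pow_bop[OF pc_scale.prems]] by simp
  then show ?case using pcone.pc_scale[OF pc_scale.IH] pc_scale by simp
qed

lemma pcone_comp: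
  assumes "P \<in> pcone C" "Q \<in> pcone C" "bounded_op C"
  shows "(\<lambda>x. P (Q x)) \<in> pcone C"
  using assms
proof (induction rule: pcone.induct)
  case (pc_pow k) then show ?case using pcone_comp_pow by blast
next
  case pc_zero then show ?case by (simp add: pcone.pc_zero)
next
  case (pc_add P1 P2) then show ?case using pcone.pc_add by blast
next
  case (pc_scale P a) then show ?case using pcone.pc_scale by blast
qed

lemma diff_sq:
  assumes "bounded_op F" "bounded_op G" "F (G x) = G (F x)"
  shows "(1/2) *\<^sub>R (c + F (F x)) - (1/2) *\<^sub>R (c + G (G x)) =
         (1/2) *\<^sub>R (F (F x + G x) - G (F x + G x))"
  using assms by (simp add: bop_add algebra_simps)

primrec itY :: "('a::complex_hilbert \<Rightarrow> 'a) \<Rightarrow> nat \<Rightarrow> 'a \<Rightarrow> 'a" where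
  "itY C 0 = (\<lambda>x. 0)"
| "itY C (Suc n) = (\<lambda>x. (1/2) *\<^sub>R (C x + itY C n (itY C n x)))"

context
  fixes C :: "'a::complex_hilbert \<Rightarrow> 'a"
  assumes Cpos: "positive_op C" and Cn: "\<And>y. norm (C y) \<le> norm y"
begin

lemma Cb: "bounded_op C" using Cpos by (rule pos_bop)

lemma Y_cone: "itY C n \<in> pcone C"
proof (induction n)
  case 0 then show ?case by (simp add: pc_zero)
next
  case (Suc n)
  have m: "(\<lambda>x. (C ^^ 1) x + itY C n (itY C n x)) \<in> pcone C"
    by (rule pc_add[OF pc_pow pcone_comp[OF Suc Suc Cb]])
  show ?case using pc_scale[OF m, of "1/2"] by simp
qed

lemma Y_bop: "bounded_op (itY C n)" using pcone_bop[OF Y_cone Cb] .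

lemma pcone_commC: "P \<in> pcone C \<Longrightarrow> P (C x) = C (P x)"
  using pcone_comm[of P C C x] bop_lin[OF Cb] by simp

lemma Y_comm: "itY C m (itY C n x) = itY C n (itY C m x)"
  using pcone_comm[OF Y_cone[of n] bop_lin[OF Y_bop[of m]]] pcone_commC[OF Y_cone[of m]] by metis

lemma D_cone: "(\<lambda>x. itY C (Suc n) x - itY C n x) \<in> pcone C"
proof (induction n)
  case 0
  have "(\<lambda>x. itY C (Suc 0) x - itY C 0 x) = (\<lambda>x. (1/2) *\<^sub>R (C ^^ 1) x)" by simp
  then show ?case using pc_scale[OF pc_pow[where C=C and k=1], of "1/2"] by simp
next
  case (Suc n)
  let ?Y1 = "itY C (Suc n)" and ?Y0 = "itY C n"
  have b1: "bounded_op ?Y1" and b0: "bounded_op ?Y0" by (rule Y_bop)+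
  have "(\<lambda>x. itY C (Suc (Suc n)) x - itY C (Suc n) x) =
     (\<lambda>x. (1/2) *\<^sub>R ((\<lambda>x. ?Y1 x - ?Y0 x) ((\<lambda>x. ?Y1 x + ?Y0 x) x)))"
  proof (rule ext)
    fix x
    have e2: "itY C (Suc (Suc n)) x = (1/2) *\<^sub>R (C x + ?Y1 (?Y1 x))"
      by (simp only: itY.simps(2)[of C "Suc n"])
    have e1: "?Y1 x = (1/2) *\<^sub>R (C x + ?Y0 (?Y0 x))"
      by (simp only: itY.simps(2)[of C n])
    show "itY C (Suc (Suc n)) x - itY C (Suc n) x =
      (1/2) *\<^sub>R ((\<lambda>x. ?Y1 x - ?Y0 x) ((\<lambda>x. ?Y1 x + ?Y0 x) x))"
      unfolding e2 using diff_sq[OF b1 b0 Y_comm[of "Suc n" n x], where c="C x", folded e1] by (simp del: itY.simps)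
  qed
  moreover have s: "(\<lambda>x. ?Y1 x + ?Y0 x) \<in> pcone C" by (rule pc_add[OF Y_cone Y_cone])
  ultimately show ?case
    using pc_scale[OF pcone_comp[OF Suc s Cb], of "1/2"] by (simp del: itY.simps)
qed

lemma diff_cone: "n \<le> m \<Longrightarrow> (\<lambda>x. itY C m x - itY C n x) \<in> pcone C"
proof (induction m rule: dec_induct)
  case base then show ?case using pc_zero by simp
next
  case (step m)
  have "(\<lambda>x. itY C (Suc m) x - itY C n x) =
        (\<lambda>x. (\<lambda>x. itY C (Suc m) x - itY C m x) x + (\<lambda>x. itY C m x - itY C n x) x)"
    by (rule ext) (simp del: itY.simps)
  then show ?case using pc_add[OF D_cone[of m] step.IH] by (simp del: itY.simps)
qed

lemma Y_norm: "norm (itY C n x) \<le> norm x"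
proof (induction n arbitrary: x)
  case 0 then show ?case by simp
next
  case (Suc n)
  have a: "norm (itY C n (itY C n x)) \<le> norm x" using Suc[of "itY C n x"] Suc[of x] by linarith
  have "norm (itY C (Suc n) x) = (1/2) * norm (C x + itY C n (itY C n x))" by simp
  also have "\<dots> \<le> (1/2) * (norm (C x) + norm (itY C n (itY C n x)))"
    by (simp add: norm_triangle_ineq)
  also have "\<dots> \<le> (1/2) * (2 * norm x)" using a Cn[of x] by (intro mult_left_mono) auto
  finally show ?case by simp
qed

end

definition Ylim :: "('a::complex_hilbert \<Rightarrow> 'a) \<Rightarrow> 'a \<Rightarrow> 'a" where
  "Ylim C x = lim (\<lambda>n. itY C n x)"

context
  fixes C :: "'a::complex_hilbert \<Rightarrow> 'a"
  assumes Cpos: "positive_op C" and Cn: "\<And>y. norm (C y) \<le> norm y"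
begin

lemma Cb': "bounded_op C" using Cpos by (rule pos_bop)
lemmas Ycone = Y_cone[OF Cpos Cn]
lemmas Ybop = Y_bop[OF Cpos Cn]
lemmas Ynorm = Y_norm[OF Cpos Cn]
lemmas Dcone = D_cone[OF Cpos Cn]
lemmas diffcone = diff_cone[OF Cpos Cn]

lemma a_inc: "incseq (\<lambda>n. Re (cinner x (itY C n x)))"
proof (rule incseq_SucI)
  fix n
  have "positive_op (\<lambda>x. itY C (Suc n) x - itY C n x)" using pcone_pos[OF Dcone Cpos] .
  then have "0 \<le> Re (cinner x (itY C (Suc n) x - itY C n x))" by (rule pos_Re)
  then show "Re (cinner x (itY C n x)) \<le> Re (cinner x (itY C (Suc n) x))"
    by (simp add: cinner_diff_right)
qed

lemma a_bound: "Re (cinner x (itY C n x)) \<le> (norm x)\<^sup>2"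
proof -
  have "Re (cinner x (itY C n x)) \<le> norm x * norm (itY C n x)" by (rule Re_cinner_le)
  also have "\<dots> \<le> norm x * norm x" using Ynorm by (simp add: mult_left_mono)
  finally show ?thesis by (simp add: power2_eq_square)
qed

lemma diff_bound:
  assumes "n \<le> m"
  shows "(norm (itY C m x - itY C n x))\<^sup>2 \<le>
     2 * (Re (cinner x (itY C m x)) - Re (cinner x (itY C n x)))"
proof -
  have P: "positive_op (\<lambda>x. itY C m x - itY C n x)" using pcone_pos[OF diffcone[OF assms] Cpos] .
  have K: "norm (itY C m y - itY C n y) \<le> 2 * norm y" for y
    using norm_triangle_ineq4[of "itY C m y" "itY C n y"] Ynorm[of m y] Ynorm[of n y] by linarith
  show ?thesis using pos_norm_bound[OF P K] by (simp add: cinner_diff_right)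
qed

lemma Y_Cauchy: "Cauchy (\<lambda>n. itY C n x)"
proof (rule CauchyI)
  fix e :: real assume e: "0 < e"
  obtain L where "(\<lambda>n. Re (cinner x (itY C n x))) \<longlonglongrightarrow> L"
    using incseq_convergent[OF a_inc[of x], where B="(norm x)\<^sup>2"] a_bound by blast
  then have "Cauchy (\<lambda>n. Re (cinner x (itY C n x)))" by (rule LIMSEQ_imp_Cauchy)
  have e2: "0 < e\<^sup>2 / 2" using e by simp
  obtain M where M: "\<forall>m\<ge>M. \<forall>n\<ge>M.
      norm (Re (cinner x (itY C m x)) - Re (cinner x (itY C n x))) < e\<^sup>2 / 2"
    using CauchyD[OF \<open>Cauchy (\<lambda>n. Re (cinner x (itY C n x)))\<close> e2] by blast
  have "norm (itY C m x - itY C n x) < e" if "m \<ge> M" "n \<ge> M" for m n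
  proof -
    have "(norm (itY C m x - itY C n x))\<^sup>2 < e\<^sup>2"
    proof (cases "n \<le> m")
      case True
      have "norm (Re (cinner x (itY C m x)) - Re (cinner x (itY C n x))) < e\<^sup>2 / 2"
        using M that by blast
      then have "Re (cinner x (itY C m x)) - Re (cinner x (itY C n x)) < e\<^sup>2 / 2" unfolding real_norm_def by arith
      then have "2 * (Re (cinner x (itY C m x)) - Re (cinner x (itY C n x))) < e\<^sup>2" by simp
      then show ?thesis using diff_bound[OF True, of x] by simp
    next
      case False
      then have mn: "m \<le> n" by simp
      have "norm (Re (cinner x (itY C n x)) - Re (cinner x (itY C m x))) < e\<^sup>2 / 2"
        using M that by blast
      then have "Re (cinner x (itY C n x)) - Re (cinner x (itY C m x)) < e\<^sup>2 / 2" unfolding real_norm_def by arith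
      moreover have "norm (itY C m x - itY C n x) = norm (itY C n x - itY C m x)"
        by (rule norm_minus_commute)
      moreover have "2 * (Re (cinner x (itY C n x)) - Re (cinner x (itY C m x))) < e\<^sup>2"
        using calculation(1) by simp
      ultimately show ?thesis using diff_bound[OF mn, of x] by simp
    qed
    then show ?thesis using e power2_less_imp_less by fastforce
  qed
  then show "\<exists>M. \<forall>m\<ge>M. \<forall>n\<ge>M. norm (itY C m x - itY C n x) < e" by blast
qed

lemma Y_lim: "(\<lambda>n. itY C n x) \<longlonglongrightarrow> Ylim C x"
  unfolding Ylim_def using Y_Cauchy Cauchy_convergent_iff convergent_LIMSEQ_iff by blast

lemma L_add: "Ylim C (x + y) = Ylim C x + Ylim C y"
proof -
  have "(\<lambda>n. itY C n (x + y)) \<longlonglongrightarrow> Ylim C x + Ylim C y"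
    using tendsto_add[OF Y_lim[of x] Y_lim[of y]] by (simp add: bop_add[OF Ybop])
  then show ?thesis using Y_lim LIMSEQ_unique by blast
qed

lemma L_scaleC: "Ylim C (scaleC c x) = scaleC c (Ylim C x)"
proof -
  have "(\<lambda>n. itY C n (scaleC c x)) \<longlonglongrightarrow> scaleC c (Ylim C x)"
    using bounded_linear.tendsto[OF bl_scaleC Y_lim[of x], of c] by (simp add: bop_scaleC[OF Ybop])
  then show ?thesis using Y_lim LIMSEQ_unique by blast
qed

lemma L_scaleR: "Ylim C (r *\<^sub>R x) = r *\<^sub>R (Ylim C x)"
  using L_scaleC[of "complex_of_real r" x] by (simp add: scaleC_real)

lemma L_norm: "norm (Ylim C x) \<le> norm x"
  using tendsto_norm[OF Y_lim[of x]] Ynorm by (intro Lim_bounded[where M=0]) auto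

lemma L_bop: "bounded_op (Ylim C)"
  unfolding bounded_op_def
  using L_scaleC bounded_linear_intro[of "Ylim C", OF L_add L_scaleR, of 1] L_norm by auto

lemma L_comm:
  assumes U: "bounded_linear U" and UC: "\<And>x. U (C x) = C (U x)"
  shows "U (Ylim C x) = Ylim C (U x)"
proof -
  have "(\<lambda>n. U (itY C n x)) \<longlonglongrightarrow> U (Ylim C x)" using bounded_linear.tendsto[OF U Y_lim] .
  moreover have "U (itY C n x) = itY C n (U x)" for n using pcone_comm[OF Ycone U UC] .
  ultimately have "(\<lambda>n. itY C n (U x)) \<longlonglongrightarrow> U (Ylim C x)" by simp
  then show ?thesis using Y_lim LIMSEQ_unique by blast
qed

lemma L_Im: "Im (cinner x (Ylim C x)) = 0"
proof -
  have "(\<lambda>n. Im (cinner x (itY C n x))) \<longlonglongrightarrow> Im (cinner x (Ylim C x))"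
    using tendsto_Im[OF tendsto_cinner_right[OF Y_lim]] .
  moreover have "Im (cinner x (itY C n x)) = 0" for n using pos_Im[OF pcone_pos[OF Ycone Cpos]] .
  ultimately have "(\<lambda>n. 0) \<longlonglongrightarrow> Im (cinner x (Ylim C x))" by simp
  then show ?thesis using LIMSEQ_unique[OF tendsto_const] by metis
qed

lemma L_fix: "Ylim C x = (1/2) *\<^sub>R (C x + Ylim C (Ylim C x))"
proof -
  let ?L = "Ylim C"
  have "(\<lambda>n. itY C n (itY C n x) - ?L (?L x)) \<longlonglongrightarrow> 0"
  proof (rule Lim_null_comparison)
    have "norm (itY C n (itY C n x) - ?L (?L x)) \<le>
        norm (itY C n x - ?L x) + norm (itY C n (?L x) - ?L (?L x))" for n
    proof -
      have "itY C n (itY C n x) - ?L (?L x) =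
          itY C n (itY C n x - ?L x) + (itY C n (?L x) - ?L (?L x))"
        by (simp add: bop_diff[OF Ybop])
      then have "norm (itY C n (itY C n x) - ?L (?L x)) \<le>
          norm (itY C n (itY C n x - ?L x)) + norm (itY C n (?L x) - ?L (?L x))"
        by (metis norm_triangle_ineq)
      then show ?thesis using Ynorm[of n "itY C n x - ?L x"] by linarith
    qed
    then show "\<forall>\<^sub>F n in sequentially. norm (itY C n (itY C n x) - ?L (?L x)) \<le>
        norm (itY C n x - ?L x) + norm (itY C n (?L x) - ?L (?L x))" by simp
    have "(\<lambda>n. norm (itY C n x - ?L x)) \<longlonglongrightarrow> 0"
      using Y_lim[of x] by (simp add: LIM_zero_iff tendsto_norm_zero_iff)
    moreover have "(\<lambda>n. norm (itY C n (?L x) - ?L (?L x))) \<longlonglongrightarrow> 0"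
      using Y_lim[of "?L x"] by (simp add: LIM_zero_iff tendsto_norm_zero_iff)
    ultimately show "(\<lambda>n. norm (itY C n x - ?L x) + norm (itY C n (?L x) - ?L (?L x))) \<longlonglongrightarrow> 0"
      using tendsto_add by fastforce
  qed
  then have "(\<lambda>n. itY C n (itY C n x)) \<longlonglongrightarrow> ?L (?L x)" by (simp add: LIM_zero_iff)
  then have "(\<lambda>n. itY C (Suc n) x) \<longlonglongrightarrow> (1/2) *\<^sub>R (C x + ?L (?L x))"
    by (simp add: tendsto_intros)
  moreover have "(\<lambda>n. itY C (Suc n) x) \<longlonglongrightarrow> ?L x" using LIMSEQ_Suc[OF Y_lim] .
  ultimately show ?thesis using LIMSEQ_unique by blast
qed

lemma sqrt_aux:
  "\<exists>S. positive_op S \<and> (\<forall>x. S (S x) = x - C x) \<and>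
     (\<forall>U. bounded_linear U \<and> (\<forall>x. U (C x) = C (U x)) \<longrightarrow> (\<forall>x. U (S x) = S (U x)))"
proof (intro exI conjI allI impI)
  let ?L = "Ylim C"
  let ?S = "\<lambda>x. x - ?L x"
  have bS: "bounded_op ?S" using bop_diff_op[OF bop_ident L_bop] .
  show "positive_op ?S"
    unfolding positive_op_def
  proof (intro conjI allI bS)
    fix x
    show "Im (cinner x (x - ?L x)) = 0" using L_Im by (simp add: cinner_diff_right cinner_self_real)
    have "Re (cinner x (?L x)) \<le> norm x * norm (?L x)" by (rule Re_cinner_le)
    also have "\<dots> \<le> norm x * norm x" using L_norm by (simp add: mult_left_mono)
    finally show "0 \<le> Re (cinner x (x - ?L x))"
      by (simp add: cinner_diff_right Re_cinner_self power2_eq_square)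
  qed
  fix x
  have "?S (?S x) = x - 2 *\<^sub>R ?L x + ?L (?L x)"
    using bop_diff[OF L_bop] by (simp add: algebra_simps scaleR_2)
  also have "?L (?L x) = 2 *\<^sub>R ?L x - C x"
  proof -
    have "2 *\<^sub>R ?L x = 2 *\<^sub>R ((1/2) *\<^sub>R (C x + ?L (?L x)))" using L_fix[of x] by metis
    then have "2 *\<^sub>R ?L x = C x + ?L (?L x)" by simp
    then show ?thesis by (metis add_diff_cancel_left')
  qed
  finally show "?S (?S x) = x - C x" by simp
next
  fix U x
  assume "bounded_linear U \<and> (\<forall>x. U (C x) = C (U x))"
  then have U: "bounded_linear U" and UC: "\<And>x. U (C x) = C (U x)" by auto
  show "U (x - Ylim C x) = U x - Ylim C (U x)"
    using L_comm[OF U UC] by (simp add: linear_simps U)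
qed

end

lemma norm_diff_sq: "(norm (u - v))\<^sup>2 = (norm u)\<^sup>2 - 2 * Re (cinner u v) + (norm (v::'a::complex_hilbert))\<^sup>2"
proof -
  have "Re (cinner v u) = Re (cinner u v)" using cinner_commute[of v u] by simp
  then show ?thesis using Re_cinner_self[of "u - v"]
    by (simp add: cinner_diff_left cinner_diff_right Re_cinner_self)
qed

lemma sqrt_exists:
  fixes T :: "'a::complex_hilbert \<Rightarrow> 'a"
  assumes P: "positive_op T"
  shows "\<exists>S. positive_op S \<and> (\<forall>x. S (S x) = T x) \<and>
     (\<forall>U. bounded_linear U \<and> (\<forall>x. U (T x) = T (U x)) \<longrightarrow> (\<forall>x. U (S x) = S (U x)))"
proof -
  obtain K where K: "0 < K" "\<And>x. norm (T x) \<le> norm x * K"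
    using bounded_linear.pos_bounded[OF bop_lin[OF pos_bop[OF P]]] by blast
  define T1 where "T1 = (\<lambda>x. (1/K) *\<^sub>R T x)"
  have T1p: "positive_op T1" unfolding T1_def using pos_scale_op[OF P] K by simp
  have T1n: "norm (T1 y) \<le> norm y" for y
  proof -
    have "norm (T1 y) = (1/K) * norm (T y)" unfolding T1_def using K(1) by simp
    also have "\<dots> \<le> (1/K) * (norm y * K)" using K by (intro mult_left_mono) auto
    also have "\<dots> = norm y" using K(1) by simp
    finally show ?thesis .
  qed
  define C where "C = (\<lambda>x. x - T1 x)"
  have Cb: "bounded_op C" unfolding C_def using bop_diff_op[OF bop_ident pos_bop[OF T1p]] .
  have Cp: "positive_op C"
    unfolding positive_op_def
  proof (intro conjI allI Cb)
    fix x
    show "Im (cinner x (C x)) = 0" unfolding C_def using pos_Im[OF T1p]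
      by (simp add: cinner_diff_right cinner_self_real)
    have "Re (cinner x (T1 x)) \<le> norm x * norm (T1 x)" by (rule Re_cinner_le)
    also have "\<dots> \<le> norm x * norm x" using T1n by (simp add: mult_left_mono)
    finally show "0 \<le> Re (cinner x (C x))" unfolding C_def
      by (simp add: cinner_diff_right Re_cinner_self power2_eq_square)
  qed
  have Cn: "norm (C y) \<le> norm y" for y
  proof -
    have e: "(norm (C y))\<^sup>2 = (norm y)\<^sup>2 - 2 * Re (cinner y (T1 y)) + (norm (T1 y))\<^sup>2"
      unfolding C_def by (rule norm_diff_sq)
    have "(norm (T1 y))\<^sup>2 \<le> 1 * Re (cinner y (T1 y))"
      by (rule pos_norm_bound[OF T1p]) (simp_all add: T1n)
    then have "(norm (C y))\<^sup>2 \<le> (norm y)\<^sup>2" using e pos_Re[OF T1p, of y] by linarith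
    then show ?thesis using power2_le_imp_le[OF _ norm_ge_zero] by blast
  qed
  obtain S0 where S0a: "positive_op S0 \<and> (\<forall>x. S0 (S0 x) = x - C x) \<and>
     (\<forall>U. bounded_linear U \<and> (\<forall>x. U (C x) = C (U x)) \<longrightarrow> (\<forall>x. U (S0 x) = S0 (U x)))"
    using sqrt_aux[OF Cp Cn] by (elim exE) 
  have S0: "positive_op S0" "\<And>x. S0 (S0 x) = x - C x"
    "\<And>U. bounded_linear U \<Longrightarrow> (\<forall>x. U (C x) = C (U x)) \<Longrightarrow> (\<forall>x. U (S0 x) = S0 (U x))"
    using S0a by auto
  have b0: "bounded_op S0" using pos_bop[OF S0(1)] .
  show ?thesis
  proof (intro exI conjI allI impI)
    show "positive_op (\<lambda>x. sqrt K *\<^sub>R S0 x)" using pos_scale_op[OF S0(1)] K(1) by simp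
    fix x
    have "sqrt K *\<^sub>R S0 (sqrt K *\<^sub>R S0 x) = (sqrt K * sqrt K) *\<^sub>R S0 (S0 x)"
      by (simp add: bop_scaleR[OF b0])
    also have "\<dots> = K *\<^sub>R (x - C x)" using K(1) S0(2) by simp
    also have "\<dots> = T x" unfolding C_def T1_def using K(1) by simp
    finally show "sqrt K *\<^sub>R S0 (sqrt K *\<^sub>R S0 x) = T x" .
  next
    fix U x
    assume "bounded_linear U \<and> (\<forall>x. U (T x) = T (U x))"
    then have U: "bounded_linear U" and UT: "\<And>x. U (T x) = T (U x)" by auto
    have "\<forall>x. U (C x) = C (U x)" unfolding C_def T1_def using UT by (simp add: linear_simps U)
    then have "U (S0 x) = S0 (U x)" using S0(3)[OF U] by blast
    then show "U (sqrt K *\<^sub>R S0 x) = sqrt K *\<^sub>R S0 (U x)" by (simp add: linear_simps U)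
  qed
qed

lemma roots_eq:
  fixes R S :: "'a::complex_hilbert \<Rightarrow> 'a"
  assumes R: "positive_op R" and S: "positive_op S" and sq: "\<And>x. R (R x) = S (S x)"
    and comm: "\<And>x. R (S x) = S (R x)"
  shows "R = S"
proof (rule ext)
  fix x
  define y where "y = R x - S x"
  have bR: "bounded_op R" and bS: "bounded_op S" using R S by (simp_all add: pos_bop)
  have "R y + S y = 0" unfolding y_def using sq comm by (simp add: bop_diff[OF bR] bop_diff[OF bS])
  then have "cinner y (R y) + cinner y (S y) = 0" by (simp add: cinner_add_right[symmetric])
  then have "Re (cinner y (R y) + cinner y (S y)) = 0" by simp
  then have "Re (cinner y (R y)) + Re (cinner y (S y)) = 0" by simp
  then have z: "Re (cinner y (R y)) = 0" "Re (cinner y (S y)) = 0"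
    using pos_Re[OF R, of y] pos_Re[OF S, of y] by linarith+
  obtain KR where KR: "0 \<le> KR" "\<And>x. norm (R x) \<le> norm x * KR"
    using bounded_linear.nonneg_bounded[OF bop_lin[OF bR]] by blast
  obtain KS where KS: "0 \<le> KS" "\<And>x. norm (S x) \<le> norm x * KS"
    using bounded_linear.nonneg_bounded[OF bop_lin[OF bS]] by blast
  have "(norm (R y))\<^sup>2 \<le> KR * 0" using pos_norm_bound[OF R, of KR y] KR z(1)
    by (simp add: mult.commute)
  then have Ry: "R y = 0" by simp
  have "(norm (S y))\<^sup>2 \<le> KS * 0" using pos_norm_bound[OF S, of KS y] KS z(2)
    by (simp add: mult.commute)
  then have Sy: "S y = 0" by simp
  have "cinner y y = cinner (R x) y - cinner (S x) y" unfolding y_def by (simp add: cinner_diff_left)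
  also have "\<dots> = cinner x (R y) - cinner x (S y)"
    using pos_hermitian[OF R, of x y] pos_hermitian[OF S, of x y] by simp
  also have "\<dots> = 0" using Ry Sy by simp
  finally have "y = 0" using cinner_self_eq_zero by blast
  then show "R x = S x" unfolding y_def by simp
qed

lemma op_sqrt_props:
  fixes T :: "'a::complex_hilbert \<Rightarrow> 'a"
  assumes P: "positive_op T"
  shows "positive_op (op_sqrt T)" "\<And>x. op_sqrt T (op_sqrt T x) = T x"
    "\<And>U x. bounded_linear U \<Longrightarrow> (\<And>x. U (T x) = T (U x)) \<Longrightarrow> U (op_sqrt T x) = op_sqrt T (U x)"
    "\<And>S. positive_op S \<Longrightarrow> (\<And>x. S (S x) = T x) \<Longrightarrow> op_sqrt T = S"
proof -
  obtain R where R: "positive_op R" "\<And>x. R (R x) = T x"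
    "\<And>U. bounded_linear U \<Longrightarrow> (\<forall>x. U (T x) = T (U x)) \<Longrightarrow> (\<forall>x. U (R x) = R (U x))"
    using sqrt_exists[OF P] by blast
  have uniq: "S = R" if S: "positive_op S" "\<And>x. S (S x) = T x" for S
  proof -
    have "\<forall>x. S (T x) = T (S x)"
    proof
      fix x
      have "S (T x) = S (S (S x))" using S(2)[of x] by simp
      also have "\<dots> = T (S x)" using S(2)[of "S x"] by simp
      finally show "S (T x) = T (S x)" .
    qed
    then have "\<forall>x. S (R x) = R (S x)" using R(3)[OF bop_lin[OF pos_bop[OF S(1)]]] by blast
    then show ?thesis by (intro roots_eq[OF S(1) R(1)]) (simp_all add: S(2) R(2))
  qed
  have eq: "op_sqrt T = R"
    unfolding op_sqrt_def
  proof (rule the_equality)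
    show "positive_op R \<and> R \<circ> R = T" using R by (auto simp: o_def)
    fix S assume "positive_op S \<and> S \<circ> S = T"
    then have "positive_op S" "\<And>x. S (S x) = T x" by (auto simp: fun_eq_iff)
    then show "S = R" by (rule uniq)
  qed
  show "positive_op (op_sqrt T)" using eq R by simp
  show "op_sqrt T (op_sqrt T x) = T x" for x using eq R by simp
  show "U (op_sqrt T x) = op_sqrt T (U x)" if "bounded_linear U" "\<And>x. U (T x) = T (U x)" for U x
    using eq R(3)[OF that(1)] that(2) by simp
  show "op_sqrt T = S" if "positive_op S" "\<And>x. S (S x) = T x" for S
    using eq uniq[OF that] by simp
qed

lemma prod_pos:
  fixes P Q :: "'a::complex_hilbert \<Rightarrow> 'a"
  assumes P: "positive_op P" and Q: "positive_op Q" and c: "\<And>x. P (Q x) = Q (P x)"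
  shows "positive_op (\<lambda>x. P (Q x))"
proof -
  let ?S = "op_sqrt P"
  have Sc: "Q (?S x) = ?S (Q x)" for x
    using op_sqrt_props(3)[OF P bop_lin[OF pos_bop[OF Q]]] c by metis
  have "cinner x (P (Q x)) = cinner (?S x) (Q (?S x))" for x
  proof -
    have "cinner x (P (Q x)) = cinner x (?S (?S (Q x)))" using op_sqrt_props(2)[OF P] by simp
    also have "\<dots> = cinner (?S x) (?S (Q x))" using pos_hermitian[OF op_sqrt_props(1)[OF P]] by simp
    finally show ?thesis using Sc by simp
  qed
  then show ?thesis unfolding positive_op_def
    using bop_comp[OF pos_bop[OF P] pos_bop[OF Q]] pos_Im[OF Q] pos_Re[OF Q] by simp
qed

lemma inv_pos:
  fixes P R :: "'a::complex_hilbert \<Rightarrow> 'a"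
  assumes P: "positive_op P" and R: "bounded_op R" and inv: "\<And>x. P (R x) = x"
  shows "positive_op R"
proof -
  have "cinner x (R x) = cinner (R x) (P (R x))" for x
  proof -
    have "cinner x (R x) = cinner (P (R x)) (R x)" using inv[of x] by simp
    also have "\<dots> = cinner (R x) (P (R x))" using pos_hermitian[OF P, of "R x" "R x"] by simp
    finally show ?thesis .
  qed
  then show ?thesis unfolding positive_op_def using R pos_Im[OF P] pos_Re[OF P] by simp
qed

lemma op_inv_eq:
  assumes "S \<circ> T = id" "T \<circ> S = id"
  shows "op_inv T = S"
  unfolding op_inv_def
proof (rule the_equality)
  show "S \<circ> T = id \<and> T \<circ> S = id" using assms by simp
  fix S' assume "S' \<circ> T = id \<and> T \<circ> S' = id"
  then have "S' = S' \<circ> (T \<circ> S)" using assms by simp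
  also have "\<dots> = (S' \<circ> T) \<circ> S" by (simp add: o_assoc)
  also have "\<dots> = S" using \<open>S' \<circ> T = id \<and> T \<circ> S' = id\<close> by simp
  finally show "S' = S" .
qed

lemma bb_invertible:
  fixes T :: "'a::complex_hilbert \<Rightarrow> 'a"
  assumes P: "positive_op T" and d: "0 < \<delta>" and lb: "\<And>x. \<delta> * (norm x)\<^sup>2 \<le> Re (cinner x (T x))"
  shows "\<exists>S. bounded_op S \<and> (\<forall>y. T (S y) = y) \<and> (\<forall>x. S (T x) = x)"
proof -
  have b: "bounded_op T" using P by (rule pos_bop)
  obtain K where K: "0 < K" "\<And>x. norm (T x) \<le> norm x * K"
    using bounded_linear.pos_bounded[OF bop_lin[OF b]] by blast
  define K1 where "K1 = max K \<delta>"
  have K1: "0 < K1" "\<delta> \<le> K1" "\<And>x. norm (T x) \<le> norm x * K1"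
  proof -
    show "0 < K1" "\<delta> \<le> K1" using K d unfolding K1_def by auto
    fix x :: 'a
    have "norm x * K \<le> norm x * K1" unfolding K1_def by (intro mult_left_mono) auto
    then show "norm (T x) \<le> norm x * K1" using K(2)[of x] by linarith
  qed
  define c where "c = \<delta> / K1\<^sup>2"
  define r where "r = 1 - \<delta>\<^sup>2 / K1\<^sup>2"
  define q where "q = sqrt r"
  have c0: "0 < c" unfolding c_def using d K1 by simp
  have r01: "0 \<le> r" "r < 1"
  proof -
    have "\<delta>\<^sup>2 \<le> K1\<^sup>2" using K1 d by (intro power_mono) auto
    then show "0 \<le> r" unfolding r_def using K1 by (simp add: field_simps)
    show "r < 1" unfolding r_def using K1 d by simp
  qed
  have q01: "0 \<le> q" "q < 1" unfolding q_def using r01 by auto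
  have contr: "norm (e - c *\<^sub>R T e) \<le> q * norm e" for e
  proof -
    have "(norm (e - c *\<^sub>R T e))\<^sup>2 = (norm e)\<^sup>2 - 2 * c * Re (cinner e (T e)) + c\<^sup>2 * (norm (T e))\<^sup>2"
      using norm_diff_sq[of e "c *\<^sub>R T e"] c0
      by (simp add: cinner_scaleR_right power_mult_distrib)
    also have "\<dots> \<le> (norm e)\<^sup>2 - 2 * c * (\<delta> * (norm e)\<^sup>2) + c\<^sup>2 * ((norm e)\<^sup>2 * K1\<^sup>2)"
    proof -
      have "2 * c * (\<delta> * (norm e)\<^sup>2) \<le> 2 * c * Re (cinner e (T e))"
        using lb[of e] c0 by simp
      moreover have "(norm (T e))\<^sup>2 \<le> (norm e * K1)\<^sup>2"
        using K1(3)[of e] by (intro power_mono) auto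
      then have "c\<^sup>2 * (norm (T e))\<^sup>2 \<le> c\<^sup>2 * ((norm e)\<^sup>2 * K1\<^sup>2)"
        by (simp add: power_mult_distrib mult_left_mono)
      ultimately show ?thesis by linarith
    qed
    also have "\<dots> = r * (norm e)\<^sup>2"
      unfolding r_def c_def using K1 by (simp add: field_simps power2_eq_square)
    finally have "(norm (e - c *\<^sub>R T e))\<^sup>2 \<le> r * (norm e)\<^sup>2" .
    then have "norm (e - c *\<^sub>R T e) \<le> sqrt (r * (norm e)\<^sup>2)" by (rule real_le_rsqrt)
    also have "\<dots> = q * norm e" unfolding q_def by (simp add: real_sqrt_mult)
    finally show ?thesis .
  qed
  have surj: "\<exists>x. T x = y" for y
  proof -
    define f where "f = (\<lambda>x. x - c *\<^sub>R T x + c *\<^sub>R y)"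
    have "\<forall>a b. dist (f a) (f b) \<le> q * dist a b"
    proof (intro allI)
      fix a b
      have "f a - f b = (a - b) - c *\<^sub>R T (a - b)"
        unfolding f_def by (simp add: bop_diff[OF b] algebra_simps)
      then show "dist (f a) (f b) \<le> q * dist a b"
        using contr[of "a - b"] by (simp add: dist_norm)
    qed
    then obtain x where "f x = x" using banach_fix_type[OF q01] by blast
    then have "c *\<^sub>R (y - T x) = 0" unfolding f_def by (simp add: algebra_simps)
    then show ?thesis using c0 by auto
  qed
  have inj: "a = b" if "T a = T b" for a b
  proof -
    have "T (a - b) = 0" using that by (simp add: bop_diff[OF b])
    then have "\<delta> * (norm (a - b))\<^sup>2 \<le> 0" using lb[of "a - b"] by simp
    then show ?thesis using d by (simp add: mult_le_0_iff)
  qed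
  define S where "S = (\<lambda>y. SOME x. T x = y)"
  have TS: "T (S y) = y" for y unfolding S_def using someI_ex[OF surj[of y]] .
  have ST: "S (T x) = x" for x using inj[of "S (T x)" x] TS by simp
  have Sadd: "S (a + b) = S a + S b" for a b
    using inj[of "S (a + b)" "S a + S b"] TS by (simp add: bop_add[OF b])
  have SscR: "S (r *\<^sub>R a) = r *\<^sub>R S a" for r a
    using inj[of "S (r *\<^sub>R a)" "r *\<^sub>R S a"] TS by (simp add: bop_scaleR[OF b])
  have SscC: "S (scaleC k a) = scaleC k (S a)" for k a
    using inj[of "S (scaleC k a)" "scaleC k (S a)"] TS by (simp add: bop_scaleC[OF b])
  have Sn: "norm (S y) \<le> norm y * (1 / \<delta>)" for y
  proof (cases "norm (S y) = 0")
    case True then show ?thesis using d by simp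
  next
    case False
    have "\<delta> * (norm (S y))\<^sup>2 \<le> Re (cinner (S y) y)" using lb[of "S y"] TS by simp
    also have "\<dots> \<le> norm (S y) * norm y" by (rule Re_cinner_le)
    finally have "norm (S y) * (\<delta> * norm (S y)) \<le> norm (S y) * norm y"
      by (simp add: power2_eq_square algebra_simps)
    then have "\<delta> * norm (S y) \<le> norm y" using False by simp
    then show ?thesis using d by (simp add: field_simps)
  qed
  have "bounded_op S" unfolding bounded_op_def
    using bounded_linear_intro[of S, OF Sadd SscR Sn] SscC by blast
  then show ?thesis using TS ST by blast
qed

lemma op_matrix_apply[simp]:
  "op_matrix P Q R S p = (P (fst p) + Q (snd p), R (fst p) + S (snd p))"
  unfolding op_matrix_def by (simp add: case_prod_beta)

lemma bop_matrix:
  fixes P Q R S :: "'a::complex_hilbert \<Rightarrow> 'a"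
  assumes "bounded_op P" "bounded_op Q" "bounded_op R" "bounded_op S"
  shows "bounded_op (op_matrix P Q R S)"
proof -
  have l: "bounded_linear P" "bounded_linear Q" "bounded_linear R" "bounded_linear S"
    using assms by (simp_all add: bop_lin)
  have f: "bounded_linear (\<lambda>p::'a\<times>'a. F (fst p) + G (snd p))"
    if "bounded_linear F" "bounded_linear G" for F G :: "'a \<Rightarrow> 'a"
    using bounded_linear_add[OF bounded_linear_compose[OF that(1) bounded_linear_fst]
        bounded_linear_compose[OF that(2) bounded_linear_snd]] by simp
  have "bounded_linear (op_matrix P Q R S)"
    unfolding op_matrix_apply[abs_def] using bounded_linear_Pair[OF f[OF l(1,2)] f[OF l(3,4)]] by simp
  moreover have "op_matrix P Q R S (scaleC c p) = scaleC c (op_matrix P Q R S p)" for c p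
    using assms by (simp add: scaleC_prod_def bop_scaleC scaleC_add_right)
  ultimately show ?thesis unfolding bounded_op_def by blast
qed

lemma cinner_prod: "cinner (a, b) (c, d) = cinner a c + cinner b d"
  by (simp add: cinner_prod_def)

theorem theorem2p10:
  fixes A B X :: "'a::complex_hilbert \<Rightarrow> 'a"
  assumes "bounded_op A" and "bounded_op B" and "bounded_op X"
    and "A \<circ> X = X \<circ> A" and "A \<circ> adj X = adj X \<circ> A" and "A \<circ> B = B \<circ> A"
    and "X \<circ> adj X = adj X \<circ> X" and "X \<circ> B = B \<circ> X" and "adj X \<circ> B = B \<circ> adj X"
    and "positive_op A" and "invertible_op A"
    and "positive_op (op_matrix A X (adj X) B)"
  shows "let trM = (\<lambda>x. A x + B x);
             detM = (\<lambda>x. A (B x) - adj X (X x));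
             Q = op_sqrt detM;
             T = (\<lambda>x. trM x + 2 *\<^sub>R Q x);
             R = op_inv (op_sqrt T)
         in positive_op T \<and> invertible_op T \<and>
            op_sqrt (op_matrix A X (adj X) B) =
              op_matrix R (\<lambda>_. 0) (\<lambda>_. 0) R \<circ>
              op_matrix (\<lambda>x. A x + Q x) X (adj X) (\<lambda>x. B x + Q x)"
proof -
  note bA = assms(1) and bB = assms(2) and bX = assms(3) and pA = assms(10) and iA = assms(11)
    and pM = assms(12)
  define X' where "X' = adj X"
  define M where "M = op_matrix A X X' B"
  have pM': "positive_op M" using pM unfolding M_def X'_def .
  have bM: "bounded_op M" using pos_bop[OF pM'] .
  have AX: "A (X x) = X (A x)" for x using assms(4) by (metis comp_apply)
  have AX': "A (X' x) = X' (A x)" for x using assms(5) unfolding X'_def by (metis comp_apply)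
  have AB: "A (B x) = B (A x)" for x using assms(6) by (metis comp_apply)
  have XX': "X (X' x) = X' (X x)" for x using assms(7) unfolding X'_def by (metis comp_apply)
  have XB: "X (B x) = B (X x)" for x using assms(8) by (metis comp_apply)
  have X'B: "X' (B x) = B (X' x)" for x using assms(9) unfolding X'_def by (metis comp_apply)
  have X'eq: "X' = (\<lambda>x. snd (M (x, 0)))"
    unfolding M_def using bop_zero[OF bB] by (simp add: fun_eq_iff)
  have bX': "bounded_op X'"
  proof -
    have bl0: "bounded_linear (\<lambda>x::'a. (x, 0::'a))"
      using bounded_linear_Pair[OF bounded_linear_ident bounded_linear_zero] by simp
    have "bounded_linear (\<lambda>x. snd (M (x, 0)))"
      using bounded_linear_compose[OF bounded_linear_snd
          bounded_linear_compose[OF bop_lin[OF bM] bl0]] by (simp add: o_def)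
    moreover have "snd (M (scaleC c x, 0)) = scaleC c (snd (M (x, 0)))" for c x
    proof -
      have e: "(scaleC c x, 0::'a) = scaleC c (x, 0)" by (simp add: scaleC_prod_def)
      have "snd (M (scaleC c x, 0)) = snd (M (scaleC c (x, 0)))" unfolding e ..
      also have "\<dots> = snd (scaleC c (M (x, 0)))" unfolding bop_scaleC[OF bM] ..
      also have "\<dots> = scaleC c (snd (M (x, 0)))" by (simp add: scaleC_prod_def)
      finally show ?thesis .
    qed
    ultimately show ?thesis unfolding X'eq bounded_op_def by simp
  qed
  have adjr: "cinner x (X y) = cinner (X' x) y" for x y
  proof -
    have "cinner (x, 0) (M (0, y)) = cinner (M (x, 0)) (0, y)" by (rule pos_hermitian[OF pM'])
    then show ?thesis unfolding M_def
      using bop_zero[OF bA] bop_zero[OF bX'] bop_zero[OF bX] bop_zero[OF bB]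
      by (simp add: cinner_prod)
  qed
  have pB: "positive_op B"
  proof -
    have "cinner (0, y) (M (0, y)) = cinner y (B y)" for y
      unfolding M_def using bop_zero[OF bX'] by (simp add: cinner_prod)
    then show ?thesis unfolding positive_op_def using bB pos_Im[OF pM'] pos_Re[OF pM']
      by metis
  qed
  obtain Ai where bAi: "bounded_op Ai" and AiA: "\<And>x. Ai (A x) = x" and AAi: "\<And>x. A (Ai x) = x"
    using iA unfolding invertible_op_def by (metis comp_apply id_apply)
  have AiX: "Ai (X x) = X (Ai x)" for x using AAi AiA AX by metis
  have AiX': "Ai (X' x) = X' (Ai x)" for x using AAi AiA AX' by metis
  have AiB: "Ai (B x) = B (Ai x)" for x using AAi AiA AB by metis
  \<comment> \<open>Schur complement\<close>
  define P where "P = (\<lambda>y. B y - X' (Ai (X y)))"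
  have bP: "bounded_op P" unfolding P_def
    using bop_diff_op[OF bB bop_comp[OF bX' bop_comp[OF bAi bX]]] .
  have pP: "positive_op P"
  proof -
    have "cinner (- Ai (X y), y) (M (- Ai (X y), y)) = cinner y (P y)" for y
      unfolding M_def P_def using AAi bop_minus[OF bA] bop_minus[OF bX']
      by (simp add: cinner_prod)
    then show ?thesis unfolding positive_op_def using bP pos_Im[OF pM'] pos_Re[OF pM']
      by metis
  qed
  define D where "D = (\<lambda>x. A (B x) - X' (X x))"
  have DAP: "D x = A (P x)" for x
    unfolding D_def P_def using AAi AX' by (simp add: bop_diff[OF bA])
  have APc: "A (P x) = P (A x)" for x
    unfolding P_def by (simp add: bop_diff[OF bA] AiA AAi AX[symmetric] AB AX')
  have pD: "positive_op D"
  proof -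
    have "D = (\<lambda>x. A (P x))" using DAP by (simp add: fun_eq_iff)
    then show ?thesis using prod_pos[OF pA pP APc] by simp
  qed
  have bD: "bounded_op D" using pos_bop[OF pD] .
  have DA: "A (D x) = D (A x)" for x
    unfolding D_def by (simp add: bop_diff[OF bA] AB AX' AX)
  have DB: "B (D x) = D (B x)" for x
    unfolding D_def by (simp add: bop_diff[OF bB] AB[symmetric] X'B[symmetric] XB[symmetric])
  have DX: "X (D x) = D (X x)" for x
    unfolding D_def by (simp add: bop_diff[OF bX] AX[symmetric] XB XX')
  have DX': "X' (D x) = D (X' x)" for x
    unfolding D_def by (simp add: bop_diff[OF bX'] AX'[symmetric] X'B XX')
  define Q where "Q = op_sqrt D"
  have pQ: "positive_op Q" unfolding Q_def by (rule op_sqrt_props(1)[OF pD])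
  have bQ: "bounded_op Q" using pos_bop[OF pQ] .
  have QQ: "Q (Q x) = A (B x) - X' (X x)" for x
    unfolding Q_def using op_sqrt_props(2)[OF pD] D_def by simp
  have Qc: "U (Q x) = Q (U x)" if "bounded_op U" "\<And>x. U (D x) = D (U x)" for U x
    unfolding Q_def using op_sqrt_props(3)[OF pD bop_lin[OF that(1)]] that(2) by blast
  have QA: "A (Q x) = Q (A x)" for x using Qc[OF bA DA] .
  have QB: "B (Q x) = Q (B x)" for x using Qc[OF bB DB] .
  have QX: "X (Q x) = Q (X x)" for x using Qc[OF bX DX] .
  have QX': "X' (Q x) = Q (X' x)" for x using Qc[OF bX' DX'] .
  define T where "T = (\<lambda>x. A x + B x + 2 *\<^sub>R Q x)"
  have pT: "positive_op T" unfolding T_def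
    using pos_add_op[OF pos_add_op[OF pA pB] pos_scale_op[OF pQ, of 2]] by simp
  have bT: "bounded_op T" using pos_bop[OF pT] .
  obtain KA where KA: "0 < KA" "\<And>x. norm (A x) \<le> norm x * KA"
    using bounded_linear.pos_bounded[OF bop_lin[OF bA]] by blast
  obtain KI where KI: "0 < KI" "\<And>x. norm (Ai x) \<le> norm x * KI"
    using bounded_linear.pos_bounded[OF bop_lin[OF bAi]] by blast
  define \<delta> where "\<delta> = 1 / (KI\<^sup>2 * KA)"
  have d0: "0 < \<delta>" unfolding \<delta>_def using KA KI by simp
  have lbA: "\<delta> * (norm x)\<^sup>2 \<le> Re (cinner x (A x))" for x
  proof -
    have "norm x \<le> norm (A x) * KI" using KI(2)[of "A x"] AiA by simp
    then have "(norm x)\<^sup>2 \<le> (norm (A x) * KI)\<^sup>2" by (intro power_mono) auto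
    also have "\<dots> = KI\<^sup>2 * (norm (A x))\<^sup>2" by (simp add: power_mult_distrib)
    also have "\<dots> \<le> KI\<^sup>2 * (KA * Re (cinner x (A x)))"
      using pos_norm_bound[OF pA, of KA x] KA by (simp add: mult.commute mult_left_mono)
    finally have "(norm x)\<^sup>2 \<le> (KI\<^sup>2 * KA) * Re (cinner x (A x))" by (simp add: mult.assoc)
    then show ?thesis unfolding \<delta>_def using KA KI by (simp add: field_simps)
  qed
  have lbT: "\<delta> * (norm x)\<^sup>2 \<le> Re (cinner x (T x))" for x
    unfolding T_def using lbA[of x] pos_Re[OF pB, of x] pos_Re[OF pQ, of x]
    by (simp add: cinner_add_right cinner_scaleR_right)
  obtain Ti where bTi: "bounded_op Ti" and TTi: "\<And>y. T (Ti y) = y" and TiT: "\<And>x. Ti (T x) = x"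
    using bb_invertible[OF pT d0 lbT] by blast
  have iT: "invertible_op T" unfolding invertible_op_def
    using bT bTi TTi TiT by (auto simp: fun_eq_iff)
  define R0 where "R0 = op_sqrt T"
  have pR0: "positive_op R0" unfolding R0_def by (rule op_sqrt_props(1)[OF pT])
  have bR0: "bounded_op R0" using pos_bop[OF pR0] .
  have R0R0: "R0 (R0 x) = T x" for x unfolding R0_def by (rule op_sqrt_props(2)[OF pT])
  have R0c: "U (R0 x) = R0 (U x)" if "bounded_op U" "\<And>x. U (T x) = T (U x)" for U x
    unfolding R0_def using op_sqrt_props(3)[OF pT bop_lin[OF that(1)]] that(2) by blast
  have Tic: "U (Ti x) = Ti (U x)" if "\<And>x. U (T x) = T (U x)" for U x
    by (metis TTi TiT that)
  have TA: "A (T x) = T (A x)" for x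
    unfolding T_def by (simp add: bop_add[OF bA] bop_scaleR[OF bA] AB QA)
  have TB: "B (T x) = T (B x)" for x
    unfolding T_def by (simp add: bop_add[OF bB] bop_scaleR[OF bB] AB QB)
  have TX: "X (T x) = T (X x)" for x
    unfolding T_def by (simp add: bop_add[OF bX] bop_scaleR[OF bX] AX XB QX)
  have TX': "X' (T x) = T (X' x)" for x
    unfolding T_def by (simp add: bop_add[OF bX'] bop_scaleR[OF bX'] AX' X'B QX')
  have TQ: "Q (T x) = T (Q x)" for x
    unfolding T_def by (simp add: bop_add[OF bQ] bop_scaleR[OF bQ] QA QB)
  have TTi': "Ti (T x) = T (Ti x)" for x using TTi TiT by simp
  define R where "R = (\<lambda>x. R0 (Ti x))"
  have bR: "bounded_op R" unfolding R_def by (rule bop_comp[OF bR0 bTi])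
  have R0R: "R0 (R x) = x" for x unfolding R_def using R0R0 TTi
    by (metis R0c[OF bTi TTi'])
  have RR0: "R (R0 x) = x" for x unfolding R_def using R0c[OF bTi TTi'] R0R0 TiT by metis
  have opinv: "op_inv R0 = R"
    by (rule op_inv_eq) (simp_all add: fun_eq_iff R0R RR0)
  have pR: "positive_op R" using inv_pos[OF pR0 bR R0R] .
  have Rc: "U (R x) = R (U x)" if "bounded_op U" "\<And>x. U (T x) = T (U x)" for U x
    unfolding R_def using R0c[OF that] Tic[of U, OF that(2)] by metis
  have RA: "A (R x) = R (A x)" for x using Rc[OF bA TA] .
  have RB: "B (R x) = R (B x)" for x using Rc[OF bB TB] .
  have RX: "X (R x) = R (X x)" for x using Rc[OF bX TX] .
  have RX': "X' (R x) = R (X' x)" for x using Rc[OF bX' TX'] .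
  have RQ: "Q (R x) = R (Q x)" for x using Rc[OF bQ TQ] .
  have RRT: "R (R (T x)) = x" for x
    using R0R0[of x] RR0[of "R0 x"] RR0[of x] by metis
  define N where "N = op_matrix (\<lambda>x. A x + Q x) X X' (\<lambda>x. B x + Q x)"
  define DR where "DR = op_matrix R (\<lambda>_. 0) (\<lambda>_. 0) R"
  have bN: "bounded_op N" unfolding N_def
    by (intro bop_matrix bop_add_op bA bQ bX bX' bB)
  have bDR: "bounded_op DR" unfolding DR_def
    by (intro bop_matrix bR bop_zero_op)
  have pN: "positive_op N"
  proof -
    have "cinner p (N p) = cinner p (M p) + cinner (fst p) (Q (fst p)) + cinner (snd p) (Q (snd p))"
      for p
      unfolding N_def M_def by (simp add: cinner_prod_def cinner_add_right)
    then show ?thesis unfolding positive_op_def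
      using bN pos_Im[OF pM'] pos_Re[OF pM'] pos_Im[OF pQ] pos_Re[OF pQ] by simp
  qed
  have pDR: "positive_op DR"
  proof -
    have "cinner p (DR p) = cinner (fst p) (R (fst p)) + cinner (snd p) (R (snd p))" for p
      unfolding DR_def by (simp add: cinner_prod_def)
    then show ?thesis unfolding positive_op_def
      using bDR pos_Im[OF pR] pos_Re[OF pR] by simp
  qed
  have DRN: "DR (N p) = N (DR p)" for p
    unfolding DR_def N_def by (simp add: bop_add[OF bR] RA RB RX RX' RQ)
  have pS: "positive_op (\<lambda>p. DR (N p))" using prod_pos[OF pDR pN DRN] .
  have NN: "N (N p) = (T (fst (M p)), T (snd (M p)))" for p
  proof -
    obtain x y where p: "p = (x, y)" by (cases p)
    have "N (N p) = ((A (A x) + A (Q x) + A (X y)) + (Q (A x) + Q (Q x) + Q (X y)) + (X (X' x) + X (B y) + X (Q y)),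
                     (X' (A x) + X' (Q x) + X' (X y)) + (B (X' x) + B (B y) + B (Q y)) + (Q (X' x) + Q (B y) + Q (Q y)))"
      unfolding N_def p
      by (simp add: bop_add[OF bA] bop_add[OF bQ] bop_add[OF bX] bop_add[OF bX'] bop_add[OF bB]
          algebra_simps)
    also have "\<dots> = (T (fst (M p)), T (snd (M p)))"
      unfolding M_def T_def p
      by (simp add: bop_add[OF bA] bop_add[OF bQ] bop_add[OF bX] bop_add[OF bX'] bop_add[OF bB]
          bop_scaleR[OF bA] bop_scaleR[OF bQ] bop_scaleR[OF bX] bop_scaleR[OF bX'] bop_scaleR[OF bB]
          bop_diff[OF bA] bop_diff[OF bQ] bop_diff[OF bX] bop_diff[OF bX'] bop_diff[OF bB]
          AB[symmetric] QA[symmetric] QB[symmetric] AX'[symmetric] X'B QX' AX[symmetric] XB QX XX' QQ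
          scaleR_2 algebra_simps)
    finally show ?thesis .
  qed
  have sq: "DR (N (DR (N p))) = M p" for p
  proof -
    have "DR (N (DR (N p))) = DR (DR (N (N p)))" using DRN by simp
    also have "\<dots> = M p" unfolding NN DR_def using RRT by simp
    finally show ?thesis .
  qed
  have sqrtM: "op_sqrt M = (\<lambda>p. DR (N p))"
    using op_sqrt_props(4)[OF pM' pS] sq by blast
  have DR': "DR = op_matrix (op_inv R0) (\<lambda>_. 0) (\<lambda>_. 0) (op_inv R0)"
    unfolding DR_def opinv ..
  have final: "positive_op T \<and> invertible_op T \<and> op_sqrt M =
      op_matrix (op_inv R0) (\<lambda>_. 0) (\<lambda>_. 0) (op_inv R0) \<circ>
      op_matrix (\<lambda>x. A x + Q x) X X' (\<lambda>x. B x + Q x)"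
    using pT iT sqrtM unfolding DR'[symmetric] N_def[symmetric] by (simp add: o_def)
  show ?thesis
    using final unfolding Let_def M_def R0_def T_def Q_def D_def X'_def .
qed

end
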